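(* Assume $\mathrm{char}\,k=0$. For every integer $a\ge1$ there are isomorphisms of $\mathcal{O}_{nc}(\mathrm{GL}_2)$-comodules $$T^aV\otimes S^{a-1}V\cong T^{a-1}V\otimes R^{-1}\otimes S^aV,\qquad S^{a-1}V\otimes T^aV\cong S^aV\otimes R^{-1}\otimes T^{a-1}V.$$
   Context: $k$ algebraically closed. $\mathcal{O}_{nc}(\mathrm{GL}_2)$ is the Hopf algebra generated by $a,b,c,d,\delta,\delta^{-1}$ with relations $ac=ca$, $bd=db$, $ad-cb=\delta=da-bc$, $\delta\delta^{-1}=1=\delta^{-1}\delta$, $a\delta^{-1}d-b\delta^{-1}c=1=d\delta^{-1}a-c\delta^{-1}b$, $b\delta^{-1}a=a\delta^{-1}b$, $c\delta^{-1}d=d\delta^{-1}c$, with $\Delta(a)=a\otimes a+b\otimes c$, $\Delta(b)=a\otimes b+b\otimes d$, $\Delta(c)=c\otimes a+d\otimes c$, $\Delta(d)=c\otimes b+d\otimes d$, $\Delta(\delta^{\pm1})=\delta^{\pm1}\otimes\delta^{\pm1}$, antipode $S(a)=\delta^{-1}d$, $S(b)=-\delta^{-1}b$, $S(c)=-\delta^{-1}c$, $S(d)=\delta^{-1}a$, $S(\delta^{\pm1})=\delta^{\mp1}$. Left comodules; tensor products via multiplication; $W^*$ the right dual. $R=kr$ with $r\mapsto\delta\otimes r$, $R^{-1}=kr'$ with $r'\mapsto\delta^{-1}\otimes r'$. For $n\ge0$, $S^nV$ is the subcomodule of the regular comodule spanned by $b^id^{n-i}$, $0\le i\le n$, and $T^nV:=(S^nV)^*\otimes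 R$. *)

theory Defs
  imports "HOL-Library.Poly_Mapping" "HOL-Computational_Algebra.Polynomial"
begin

datatype gen = GA | GB | GC | GD | GDel | GDelInv

datatype ncword = NW "gen list"

instantiation ncword :: monoid_add
begin
fun plus_ncword :: "ncword \<Rightarrow> ncword \<Rightarrow> ncword" where
  "plus_ncword (NW xs) (NW ys) = NW (xs @ ys)"
definition zero_ncword :: ncword where "zero_ncword = NW []"
instance
proof
  fix a b c :: ncword
  show "a + b + c = a + (b + c)" by (cases a; cases b; cases c) auto
  show "0 + a = a" by (cases a) (auto simp: zero_ncword_def)
  show "a + 0 = a" by (cases a) (auto simp: zero_ncword_def)
qed
end

text \<open>Free (noncommutative) k-algebra: finitely supported functions on words,
  multiplication = convolution along concatenation.\<close>
type_synonym 'k fa = "ncword \<Rightarrow>\<^sub>0 'k"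

definition fconst :: "'k::ring_1 \<Rightarrow> 'k fa" where
  "fconst c = Poly_Mapping.single 0 c"

definition fword :: "gen list \<Rightarrow> 'k::ring_1 fa" where
  "fword xs = Poly_Mapping.single (NW xs) 1"

definition fg :: "gen \<Rightarrow> 'k::ring_1 fa" where
  "fg x = fword [x]"

definition gl2_rels :: "'k::ring_1 fa list" where
  "gl2_rels =
    [ fg GA * fg GC - fg GC * fg GA,
      fg GB * fg GD - fg GD * fg GB,
      fg GA * fg GD - fg GC * fg GB - fg GDel,
      fg GD * fg GA - fg GB * fg GC - fg GDel,
      fg GDel * fg GDelInv - 1,
      fg GDelInv * fg GDel - 1,
      fg GA * fg GDelInv * fg GD - fg GB * fg GDelInv * fg GC - 1,
      fg GD * fg GDelInv * fg GA - fg GC * fg GDelInv * fg GB - 1,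
      fg GB * fg GDelInv * fg GA - fg GA * fg GDelInv * fg GB,
      fg GC * fg GDelInv * fg GD - fg GD * fg GDelInv * fg GC ]"

inductive_set gl2_ideal :: "'k::ring_1 fa set" where
  rel: "r \<in> set gl2_rels \<Longrightarrow> r \<in> gl2_ideal"
| zero: "0 \<in> gl2_ideal"
| add: "x \<in> gl2_ideal \<Longrightarrow> y \<in> gl2_ideal \<Longrightarrow> x + y \<in> gl2_ideal"
| mult: "x \<in> gl2_ideal \<Longrightarrow> u * x * v \<in> gl2_ideal"

definition heq :: "'k::ring_1 fa \<Rightarrow> 'k fa \<Rightarrow> bool" where
  "heq x y \<longleftrightarrow> x - y \<in> gl2_ideal"

text \<open>Coproduct of the generators a,b,c,d as lists of simple tensors (left, right).\<close>
fun gl2_coprod :: "gen \<Rightarrow> (gen \<times> gen) list" where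
  "gl2_coprod GA = [(GA, GA), (GB, GC)]"
| "gl2_coprod GB = [(GA, GB), (GB, GD)]"
| "gl2_coprod GC = [(GC, GA), (GD, GC)]"
| "gl2_coprod GD = [(GC, GB), (GD, GD)]"
| "gl2_coprod GDel = [(GDel, GDel)]"
| "gl2_coprod GDelInv = [(GDelInv, GDelInv)]"

text \<open>Inverse of the antipode S on generators (S(a) = del^-1 d etc. gives
  S^-1(a) = d del^-1, S^-1(b) = - b del^-1, S^-1(c) = - c del^-1, S^-1(d) = a del^-1);
  extended as an algebra anti-homomorphism.\<close>
fun Sinv_gen :: "gen \<Rightarrow> 'k::ring_1 fa" where
  "Sinv_gen GA = fg GD * fg GDelInv"
| "Sinv_gen GB = - (fg GB * fg GDelInv)"
| "Sinv_gen GC = - (fg GC * fg GDelInv)"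
| "Sinv_gen GD = fg GA * fg GDelInv"
| "Sinv_gen GDel = fg GDelInv"
| "Sinv_gen GDelInv = fg GDel"

definition Sinv_word :: "ncword \<Rightarrow> 'k::ring_1 fa" where
  "Sinv_word w = (case w of NW xs \<Rightarrow> foldr (\<lambda>x r. Sinv_gen x * r) (rev xs) 1)"

definition Sinv :: "'k::ring_1 fa \<Rightarrow> 'k fa" where
  "Sinv f = (\<Sum>w\<in>Poly_Mapping.keys f. fconst (Poly_Mapping.lookup f w) * Sinv_word w)"

text \<open>A finite-dimensional left comodule with basis w_0..w_(n-1) is recorded as
  (n, X) where rho(w_j) = sum_i X i j \<otimes> w_i.\<close>
type_synonym 'k comod = "nat \<times> (nat \<Rightarrow> nat \<Rightarrow> 'k fa)"

text \<open>Tensor product (coaction via multiplication): basis v_i \<otimes> w_j indexed by i*n+j.\<close>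
definition ctensor :: "'k::ring_1 comod \<Rightarrow> 'k comod \<Rightarrow> 'k comod" where
  "ctensor V W = (case V of (m, X) \<Rightarrow> case W of (n, Y) \<Rightarrow>
     (m * n, \<lambda>p q. X (p div n) (q div n) * Y (p mod n) (q mod n)))"

text \<open>Right dual W^* (dual basis; evaluation W \<otimes> W^* \<rightarrow> k is a comodule map):
  coefficient matrix S^-1 applied to the transpose.\<close>
definition cdual :: "'k::ring_1 comod \<Rightarrow> 'k comod" where
  "cdual V = (case V of (m, X) \<Rightarrow> (m, \<lambda>i k. Sinv (X k i)))"

definition cR :: "'k::ring_1 comod" where
  "cR = (1, \<lambda>_ _. fg GDel)"

definition cRinv :: "'k::ring_1 comod" where
  "cRinv = (1, \<lambda>_ _. fg GDelInv)"

text \<open>S^n V: basis b^i d^(n-i), i = 0..n (index i).  The coaction of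
  b^j d^(n-j) = Delta(b)^j Delta(d)^(n-j) is expanded over all choices of summands;
  the right tensor factor is a word in b,d, which equals b^i d^(n-i) (as bd = db)
  where i is its number of b's.\<close>
definition SnV_coeff :: "nat \<Rightarrow> nat \<Rightarrow> nat \<Rightarrow> 'k::ring_1 fa" where
  "SnV_coeff n i j =
    (let L = replicate j GB @ replicate (n - j) GD in
     \<Sum>cs\<in>{cs :: bool list. length cs = n}.
       (let terms = map (\<lambda>(x, c). gl2_coprod x ! (if c then 0 else 1)) (zip L cs) in
        if length (filter (\<lambda>y. y = GB) (map snd terms)) = i
        then fword (map fst terms) else 0))"

definition SnV :: "nat \<Rightarrow> 'k::ring_1 comod" where
  "SnV n = (n + 1, SnV_coeff n)"

definition TnV :: "nat \<Rightarrow> 'k::ring_1 comod" where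
  "TnV n = ctensor (cdual (SnV n)) cR"

definition comod_iso :: "'k::ring_1 comod \<Rightarrow> 'k comod \<Rightarrow> bool" where
  "comod_iso V W = (case V of (m, X) \<Rightarrow> case W of (n, Y) \<Rightarrow>
     m = n \<and> (\<exists>P Q :: nat \<Rightarrow> nat \<Rightarrow> 'k.
        (\<forall>i<m. \<forall>j<m. (\<Sum>l<m. P i l * Q l j) = (if i = j then 1 else 0)) \<and>
        (\<forall>i<m. \<forall>j<m. (\<Sum>l<m. Q i l * P l j) = (if i = j then 1 else 0)) \<and>
        (\<forall>i<m. \<forall>j<m. heq (\<Sum>l<m. Y i l * fconst (P l j)) (\<Sum>l<m. fconst (P i l) * X l j))))"

definition alg_closed_type :: "'k::field itself \<Rightarrow> bool" where
  "alg_closed_type _ \<longleftrightarrow> (\<forall>p :: 'k poly. degree p \<ge> 1 \<longrightarrow> (\<exists>x. poly p x = 0))"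

end

theory Submission
  imports Defs
begin


abbreviation "gA \<equiv> fg GA" 
abbreviation "gB \<equiv> fg GB"
abbreviation "gC \<equiv> fg GC"
abbreviation "gD \<equiv> fg GD"
abbreviation "dl \<equiv> fg GDel"
abbreviation "di \<equiv> fg GDelInv"

lemma ideal_lmult: "x \<in> gl2_ideal \<Longrightarrow> u * x \<in> gl2_ideal"
  using gl2_ideal.mult[of x u 1] by simp
lemma ideal_rmult: "x \<in> gl2_ideal \<Longrightarrow> x * v \<in> gl2_ideal"
  using gl2_ideal.mult[of x 1 v] by simp
lemma ideal_neg: "x \<in> gl2_ideal \<Longrightarrow> - x \<in> gl2_ideal"
  using gl2_ideal.mult[of x "-1" 1] by simp
lemma ideal_diff: "x \<in> gl2_ideal \<Longrightarrow> y \<in> gl2_ideal \<Longrightarrow> x - y \<in> gl2_ideal"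
  using gl2_ideal.add[of x "-y"] ideal_neg[of y] by simp

lemma heq_refl[simp]: "heq x x" by (simp add: heq_def gl2_ideal.zero)
lemma heq_sym: "heq x y \<Longrightarrow> heq y x"
  unfolding heq_def using ideal_neg by fastforce
lemma heq_trans: "heq x y \<Longrightarrow> heq y z \<Longrightarrow> heq x z"
  unfolding heq_def using gl2_ideal.add[of "x-y" "y-z"] by simp
lemma heq_add: "heq x y \<Longrightarrow> heq x' y' \<Longrightarrow> heq (x + x') (y + y')"
  unfolding heq_def using gl2_ideal.add[of "x-y" "x'-y'"] by (simp add: algebra_simps)
lemma heq_diff: "heq x y \<Longrightarrow> heq x' y' \<Longrightarrow> heq (x - x') (y - y')"
  unfolding heq_def using ideal_diff[of "x-y" "x'-y'"] by (simp add: algebra_simps)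
lemma heq_uminus: "heq x y \<Longrightarrow> heq (- x) (- y)"
  unfolding heq_def using ideal_neg[of "x-y"] by (simp add: algebra_simps)
lemma heq_mult: "heq x y \<Longrightarrow> heq x' y' \<Longrightarrow> heq (x * x') (y * y')"
proof -
  assume "heq x y" "heq x' y'"
  hence "(x-y)*x' \<in> gl2_ideal" "y*(x'-y') \<in> gl2_ideal"
    unfolding heq_def using ideal_lmult ideal_rmult by auto
  hence "(x-y)*x' + y*(x'-y') \<in> gl2_ideal" by (rule gl2_ideal.add)
  thus ?thesis unfolding heq_def by (simp add: algebra_simps)
qed
lemma heq_sum: "(\<And>x. x \<in> S \<Longrightarrow> heq (f x) (g x)) \<Longrightarrow> heq (sum f S) (sum g S)"
  by (induction S rule: infinite_finite_induct) (auto intro: heq_add)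

lemma heq_eqI: "x = y \<Longrightarrow> heq x y" by simp

lemma rel_mem: "r \<in> set gl2_rels \<Longrightarrow> heq r 0"
  by (simp add: heq_def gl2_ideal.rel)

lemma R1: "heq (gA * gC) (gC * gA)"
  using rel_mem[of "gA * gC - gC * gA"] by (simp add: gl2_rels_def heq_def)
lemma R2: "heq (gB * gD) (gD * gB)"
  using rel_mem[of "gB * gD - gD * gB"] by (simp add: gl2_rels_def heq_def)
lemma R3: "heq (gA * gD - gC * gB) dl"
  using rel_mem[of "gA * gD - gC * gB - dl"] by (simp add: gl2_rels_def heq_def)
lemma R4: "heq (gD * gA - gB * gC) dl"
  using rel_mem[of "gD * gA - gB * gC - dl"] by (simp add: gl2_rels_def heq_def)
lemma R5: "heq (dl * di) 1"
  using rel_mem[of "dl * di - 1"] by (simp add: gl2_rels_def heq_def)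
lemma R6: "heq (di * dl) 1"
  using rel_mem[of "di * dl - 1"] by (simp add: gl2_rels_def heq_def)
lemma R7: "heq (gA * di * gD - gB * di * gC) 1"
  using rel_mem[of "gA * di * gD - gB * di * gC - 1"] by (simp add: gl2_rels_def heq_def)
lemma R8: "heq (gD * di * gA - gC * di * gB) 1"
  using rel_mem[of "gD * di * gA - gC * di * gB - 1"] by (simp add: gl2_rels_def heq_def)
lemma R9: "heq (gB * di * gA) (gA * di * gB)"
  using rel_mem[of "gB * di * gA - gA * di * gB"] by (simp add: gl2_rels_def heq_def)
lemma R10: "heq (gC * di * gD) (gD * di * gC)"
  using rel_mem[of "gC * di * gD - gD * di * gC"] by (simp add: gl2_rels_def heq_def)




lemma fword_Nil[simp]: "fword [] = 1"
  by (simp add: fword_def zero_ncword_def[symmetric])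
lemma fword_Cons: "fword (x # xs) = fg x * fword xs"
  by (simp add: fword_def fg_def mult_single)
lemma fword_prod: "fword xs = prod_list (map fg xs)"
  by (induction xs) (simp_all add: fword_Cons)

lemma fconst_0[simp]: "fconst 0 = 0" by (simp add: fconst_def)
lemma fconst_1[simp]: "fconst 1 = 1" by (simp add: fconst_def)
lemma fconst_add: "fconst (x + y) = fconst x + fconst y" by (simp add: fconst_def single_add)
lemma fconst_diff: "fconst (x - y) = fconst x - fconst y" by (simp add: fconst_def single_diff)
lemma fconst_if: "fconst (if P then x else y) = (if P then fconst x else fconst y)" by simp

lemma Sinv_alt: "finite S \<Longrightarrow> Poly_Mapping.keys f \<subseteq> S \<Longrightarrow>
   Sinv f = (\<Sum>w\<in>S. fconst (Poly_Mapping.lookup f w) * Sinv_word w)"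
  unfolding Sinv_def
  by (rule sum.mono_neutral_left) (auto simp: in_keys_iff)

lemma Sinv_add: "Sinv (f + g) = Sinv f + Sinv g"
proof -
  let ?S = "Poly_Mapping.keys f \<union> Poly_Mapping.keys g"
  have fin: "finite ?S" by simp
  have "Poly_Mapping.keys (f+g) \<subseteq> ?S" by (rule keys_add)
  then show ?thesis
    using Sinv_alt[OF fin, of f] Sinv_alt[OF fin, of g] Sinv_alt[OF fin, of "f+g"]
    by (simp add: lookup_add fconst_add distrib_right sum.distrib)
qed

lemma Sinv_zero[simp]: "Sinv 0 = 0" by (simp add: Sinv_def)

lemma Sinv_sum: "Sinv (sum f S) = (\<Sum>x\<in>S. Sinv (f x))"
  by (induction S rule: infinite_finite_induct) (simp_all add: Sinv_add)

lemma Sinv_if: "Sinv (if P then x else 0) = (if P then Sinv x else 0)" by simp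

lemma foldr_prod: "foldr (\<lambda>x r. g x * r) xs 1 = prod_list (map g xs)"
  by (induction xs) auto

lemma Sinv_fword: "Sinv (fword w) = prod_list (map Sinv_gen (rev w))"
proof -
  have "Sinv (fword w :: 'a fa) = fconst 1 * Sinv_word (NW w)"
    unfolding Sinv_def fword_def by simp
  thus ?thesis by (simp add: Sinv_word_def foldr_prod)
qed

section \<open>coefficient lists\<close>

fun cf :: "('k::ring_1 fa \<times> 'k fa) list \<Rightarrow> nat \<Rightarrow> 'k fa" where
  "cf [] i = (if i = 0 then 1 else 0)"
| "cf ((x,y)#L) i = (if i = 0 then 0 else x * cf L (i-1)) + y * cf L i"

definition cfm :: "('k::ring_1 fa \<times> 'k fa) list \<Rightarrow> nat \<Rightarrow> 'k fa" where
  "cfm L i = (if i = 0 then 0 else cf L (i - 1))"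

lemma cf_Cons: "cf ((x,y)#L) i = x * cfm L i + y * cf L i"
  by (simp add: cfm_def)

lemma cf_beyond: "length L < i \<Longrightarrow> cf L i = 0"
  by (induction L arbitrary: i) auto

lemma cf_snoc: "cf (L @ [(x,y)]) i = cfm L i * x + cf L i * y"
proof (induction L arbitrary: i)
  case Nil
  then show ?case by (cases i) (auto simp: cfm_def)
next
  case (Cons p L)
  obtain u v where p: "p = (u,v)" by (cases p)
  show ?case
  proof (cases i)
    case 0
    then show ?thesis using Cons p by (simp add: cfm_def algebra_simps)
  next
    case (Suc i')
    then show ?thesis using Cons[of i] Cons[of i'] p
      by (cases i') (simp_all add: cfm_def algebra_simps)
  qed
qed

lemma cfm_snoc: "cfm (L @ [(x,y)]) i = (if i = 0 then 0 else cfm L (i-1) * x + cf L (i-1) * y)"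
  by (simp add: cfm_def cf_snoc)




definition sel :: "('a \<times> 'a) \<times> bool \<Rightarrow> 'a" where
  "sel pc = (if snd pc then fst (fst pc) else snd (fst pc))"

lemma bool_lists_Suc: "{cs::bool list. length cs = Suc n} =
   (Cons True) ` {cs. length cs = n} \<union> (Cons False) ` {cs. length cs = n}"
  by (auto simp: length_Suc_conv image_iff)

lemma fin_bool_lists: "finite {cs::bool list. length cs = n}"
  by (induction n) (simp_all add: bool_lists_Suc)

lemma sum_bool_lists: "(\<Sum>cs\<in>{cs::bool list. length cs = Suc n}. F cs) =
   (\<Sum>cs\<in>{cs. length cs = n}. F (True # cs)) + (\<Sum>cs\<in>{cs. length cs = n}. F (False # cs))"
  unfolding bool_lists_Suc
  by (subst sum.union_disjoint) (auto simp: fin_bool_lists sum.reindex)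

lemma cf_sum: "(\<Sum>cs\<in>{cs::bool list. length cs = length L}.
    if length (filter (\<lambda>c. c) cs) = i then prod_list (map sel (zip L cs)) else 0) = cf L i"
proof (induction L arbitrary: i)
  case Nil
  then show ?case by simp
next
  case (Cons p L)
  obtain x y where p: "p = (x,y)" by (cases p)
  have A: "(\<Sum>cs\<in>{cs::bool list. length cs = length L}.
      if length (filter (\<lambda>c. c) (True#cs)) = i then prod_list (map sel (zip (p#L) (True#cs))) else 0)
     = x * cfm L i"
  proof (cases i)
    case 0 then show ?thesis by (simp add: cfm_def)
  next
    case (Suc i')
    have "(\<Sum>cs\<in>{cs::bool list. length cs = length L}.
      if length (filter (\<lambda>c. c) (True#cs)) = i then prod_list (map sel (zip (p#L) (True#cs))) else 0)
      = (\<Sum>cs\<in>{cs::bool list. length cs = length L}.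
      x * (if length (filter (\<lambda>c. c) cs) = i' then prod_list (map sel (zip L cs)) else 0))"
      by (rule sum.cong) (auto simp: Suc p sel_def)
    also have "\<dots> = x * cf L i'" by (simp add: sum_distrib_left[symmetric] Cons)
    finally show ?thesis by (simp add: Suc cfm_def)
  qed
  have B: "(\<Sum>cs\<in>{cs::bool list. length cs = length L}.
      if length (filter (\<lambda>c. c) (False#cs)) = i then prod_list (map sel (zip (p#L) (False#cs))) else 0)
     = y * cf L i"
  proof -
    have "(\<Sum>cs\<in>{cs::bool list. length cs = length L}.
      if length (filter (\<lambda>c. c) (False#cs)) = i then prod_list (map sel (zip (p#L) (False#cs))) else 0)
      = (\<Sum>cs\<in>{cs::bool list. length cs = length L}.
      y * (if length (filter (\<lambda>c. c) cs) = i then prod_list (map sel (zip L cs)) else 0))"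
      by (rule sum.cong) (auto simp: p sel_def)
    also have "\<dots> = y * cf L i" by (simp add: sum_distrib_left[symmetric] Cons)
    finally show ?thesis .
  qed
  have "cf (p#L) i = x * cfm L i + y * cf L i" by (simp only: p cf_Cons)
  then show ?case unfolding length_Cons sum_bool_lists A B by simp
qed

lemma cf_sum_rev: "(\<Sum>cs\<in>{cs::bool list. length cs = length L}.
    if length (filter (\<lambda>c. c) cs) = i then prod_list (rev (map sel (zip L cs))) else 0) = cf (rev L) i"
proof (induction L arbitrary: i)
  case Nil
  then show ?case by simp
next
  case (Cons p L)
  obtain x y where p: "p = (x,y)" by (cases p)
  have A: "(\<Sum>cs\<in>{cs::bool list. length cs = length L}.
      if length (filter (\<lambda>c. c) (True#cs)) = i then prod_list (rev (map sel (zip (p#L) (True#cs)))) else 0)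
     = cfm (rev L) i * x"
  proof (cases i)
    case 0 then show ?thesis by (simp add: cfm_def)
  next
    case (Suc i')
    have "(\<Sum>cs\<in>{cs::bool list. length cs = length L}.
      if length (filter (\<lambda>c. c) (True#cs)) = i then prod_list (rev (map sel (zip (p#L) (True#cs)))) else 0)
      = (\<Sum>cs\<in>{cs::bool list. length cs = length L}.
      (if length (filter (\<lambda>c. c) cs) = i' then prod_list (rev (map sel (zip L cs))) else 0) * x)"
      by (rule sum.cong) (auto simp: Suc p sel_def)
    also have "\<dots> = cf (rev L) i' * x" by (simp add: sum_distrib_right[symmetric] Cons)
    finally show ?thesis by (simp add: Suc cfm_def)
  qed
  have B: "(\<Sum>cs\<in>{cs::bool list. length cs = length L}.
      if length (filter (\<lambda>c. c) (False#cs)) = i then prod_list (rev (map sel (zip (p#L) (False#cs)))) else 0)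
     = cf (rev L) i * y"
  proof -
    have "(\<Sum>cs\<in>{cs::bool list. length cs = length L}.
      if length (filter (\<lambda>c. c) (False#cs)) = i then prod_list (rev (map sel (zip (p#L) (False#cs)))) else 0)
      = (\<Sum>cs\<in>{cs::bool list. length cs = length L}.
      (if length (filter (\<lambda>c. c) cs) = i then prod_list (rev (map sel (zip L cs))) else 0) * y)"
      by (rule sum.cong) (auto simp: p sel_def)
    also have "\<dots> = cf (rev L) i * y" by (simp add: sum_distrib_right[symmetric] Cons)
    finally show ?thesis .
  qed
  have "cf (rev (p#L)) i = cfm (rev L) i * x + cf (rev L) i * y" by (simp add: p cf_snoc)
  then show ?case unfolding length_Cons sum_bool_lists A B by simp
qed




definition terms :: "gen list \<Rightarrow> bool list \<Rightarrow> (gen \<times> gen) list" where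
  "terms L cs = map (\<lambda>(x, c). gl2_coprod x ! (if c then 0 else 1)) (zip L cs)"

definition lin :: "(gen \<Rightarrow> 'k::ring_1 fa) \<Rightarrow> gen \<Rightarrow> 'k fa \<times> 'k fa" where
  "lin g x = (g (fst (gl2_coprod x ! 0)), g (fst (gl2_coprod x ! 1)))"

lemma terms_count: "length cs = length L \<Longrightarrow> set L \<subseteq> {GB, GD} \<Longrightarrow>
  length (filter (\<lambda>y. y = GB) (map snd (terms L cs))) = length (filter (\<lambda>c. c) cs)"
proof (induction cs L rule: list_induct2)
  case Nil then show ?case by (simp add: terms_def)
next
  case (Cons c cs x L)
  then show ?case by (auto simp: terms_def)
qed

lemma terms_fst: "length cs = length L \<Longrightarrow>
  map g (map fst (terms L cs)) = map sel (zip (map (lin g) L) cs)"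
proof (induction cs L rule: list_induct2)
  case Nil then show ?case by (simp add: terms_def)
next
  case (Cons c cs x L)
  then show ?case by (auto simp: terms_def lin_def sel_def)
qed

lemma SnV_coeff_alt: "j \<le> n \<Longrightarrow> SnV_coeff n i j = (\<Sum>cs\<in>{cs :: bool list. length cs = n}.
   (if length (filter (\<lambda>c. c) cs) = i then
     fword (map fst (terms (replicate j GB @ replicate (n - j) GD) cs)) else 0))"
  unfolding SnV_coeff_def Let_def terms_def[symmetric]
  by (rule sum.cong, simp, subst terms_count) (auto split: if_splits)

lemma SnV_cf: assumes "j \<le> n"
  shows "SnV_coeff n i j = cf (replicate j (gA,gB) @ replicate (n-j) (gC,gD)) i"
proof -
  let ?L = "replicate j GB @ replicate (n - j) GD"
  have len: "length ?L = n" using assms by simp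
  have "SnV_coeff n i j = (\<Sum>cs\<in>{cs :: bool list. length cs = length ?L}.
   (if length (filter (\<lambda>c. c) cs) = i then prod_list (map sel (zip (map (lin fg) ?L) cs)) else 0))"
    unfolding SnV_coeff_alt[OF assms] len
  proof (rule sum.cong, simp)
    fix cs :: "bool list" assume "cs \<in> {cs. length cs = n}"
    hence eq: "map fg (map fst (terms ?L cs)) = map sel (zip (map (lin fg) ?L) cs)"
      using len by (intro terms_fst) simp
    show "(if length (filter (\<lambda>c. c) cs) = i then fword (map fst (terms ?L cs)) else 0) =
      (if length (filter (\<lambda>c. c) cs) = i then prod_list (map sel (zip (map (lin fg) ?L) cs)) else 0)"
      unfolding fword_prod eq by (rule refl)
  qed
  also have "\<dots> = cf (map (lin fg) ?L) i"
    using cf_sum[where L="map (lin fg) ?L" and i=i] by simp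
  finally show ?thesis by (simp add: lin_def)
qed

lemma SnV_Sinv: assumes "j \<le> n"
  shows "Sinv (SnV_coeff n i j) = cf (replicate (n-j) (Sinv_gen GC, Sinv_gen GD) @
     replicate j (Sinv_gen GA, Sinv_gen GB)) i"
proof -
  let ?L = "replicate j GB @ replicate (n - j) GD"
  have len: "length ?L = n" using assms by simp
  have "Sinv (SnV_coeff n i j) = (\<Sum>cs\<in>{cs :: bool list. length cs = length ?L}.
   (if length (filter (\<lambda>c. c) cs) = i then prod_list (rev (map sel (zip (map (lin Sinv_gen) ?L) cs))) else 0))"
    unfolding SnV_coeff_alt[OF assms] len Sinv_sum Sinv_if
  proof (rule sum.cong, simp)
    fix cs :: "bool list" assume "cs \<in> {cs. length cs = n}"
    hence eq: "map Sinv_gen (map fst (terms ?L cs)) = map sel (zip (map (lin Sinv_gen) ?L) cs)"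
      using len by (intro terms_fst) simp
    show "(if length (filter (\<lambda>c. c) cs) = i then Sinv (fword (map fst (terms ?L cs))) else 0) =
      (if length (filter (\<lambda>c. c) cs) = i then prod_list (rev (map sel (zip (map (lin Sinv_gen) ?L) cs))) else 0)"
      unfolding Sinv_fword rev_map[symmetric] eq by (rule refl)
  qed
  also have "\<dots> = cf (rev (map (lin Sinv_gen) ?L)) i"
    using cf_sum_rev[where L="map (lin Sinv_gen) ?L" and i=i] by simp
  finally show ?thesis by (simp add: lin_def)
qed




lemma heq_cong_eq: "heq x y \<Longrightarrow> x = x' \<Longrightarrow> y = y' \<Longrightarrow> heq x' y'" by simp

definition ceq :: "('k::ring_1 fa \<times> 'k fa) list \<Rightarrow> ('k fa \<times> 'k fa) list \<Rightarrow> bool" where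
  "ceq L L' \<longleftrightarrow> (\<forall>i. heq (cf L i) (cf L' i))"

lemma ceq_cf: "ceq L L' \<Longrightarrow> heq (cf L i) (cf L' i)" by (simp add: ceq_def)
lemma ceq_cfm: "ceq L L' \<Longrightarrow> heq (cfm L i) (cfm L' i)" by (simp add: ceq_def cfm_def)
lemma ceq_refl[simp]: "ceq L L" by (simp add: ceq_def)
lemma ceq_sym: "ceq L L' \<Longrightarrow> ceq L' L" by (simp add: ceq_def heq_sym)
lemma ceq_trans: "ceq L L' \<Longrightarrow> ceq L' L'' \<Longrightarrow> ceq L L''" unfolding ceq_def by (blast intro: heq_trans)

lemma ceq_Cons: "ceq L L' \<Longrightarrow> ceq (p#L) (p#L')"
  by (cases p) (auto simp: ceq_def cf_Cons intro!: heq_add heq_mult ceq_cfm ceq_cf)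
lemma ceq_snoc: "ceq L L' \<Longrightarrow> ceq (L@[p]) (L'@[p])"
  by (cases p) (auto simp: ceq_def cf_snoc intro!: heq_add heq_mult ceq_cfm ceq_cf)
lemma ceq_prefix: "ceq L L' \<Longrightarrow> ceq (P@L) (P@L')"
  by (induction P) (auto intro: ceq_Cons)
lemma ceq_suffix: "ceq L L' \<Longrightarrow> ceq (L@S) (L'@S)"
proof (induction S rule: rev_induct)
  case Nil then show ?case by simp
next
  case (snoc x xs)
  then show ?case using ceq_snoc[of "L@xs" "L'@xs" x] by simp
qed

lemma ceq_swap: assumes "ceq [p,q] [q,p]"
  shows "ceq (P @ p # replicate n q @ S) (P @ replicate n q @ p # S)"
proof (induction n arbitrary: P)
  case 0 then show ?case by simp
next
  case (Suc n)
  have "ceq (P @ p # q # (replicate n q @ S)) (P @ q # p # (replicate n q @ S))"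
    using ceq_prefix[OF ceq_suffix[OF assms, of "replicate n q @ S"], of P] by simp
  moreover have "ceq ((P @ [q]) @ p # replicate n q @ S) ((P @ [q]) @ replicate n q @ p # S)"
    by (rule Suc)
  ultimately show ?case by (auto intro: ceq_trans)
qed

abbreviation "U \<equiv> (gA, gB)"
abbreviation "W \<equiv> (gC, gD)"
abbreviation "U' \<equiv> (Sinv_gen GA, Sinv_gen GB)"
abbreviation "W' \<equiv> (Sinv_gen GC, Sinv_gen GD)"

lemma heq_ad: "heq (gA * gD + gB * gC) (gC * gB + gD * gA)"
proof -
  have "heq (gA * gD - gC * gB) (gD * gA - gB * gC)" by (rule heq_trans[OF R3 heq_sym[OF R4]])
  from heq_add[OF this heq_refl[of "gC * gB + gB * gC"]]
  show ?thesis by (rule heq_cong_eq) (simp_all add: algebra_simps)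
qed

lemma ceq_UW: "ceq [U, W] [W, U]"
  unfolding ceq_def
proof
  fix i :: nat
  consider "i = 0" | "i = 1" | "i = 2" | "i > 2" by linarith
  then show "heq (cf [U, W] i) (cf [W, U] i)"
  proof cases
    case 1 then show ?thesis using R2 by simp
  next
    case 2 then show ?thesis using heq_ad by simp
  next
    case 3 then show ?thesis using R1 by simp
  qed simp
qed

lemma heq_ad': "heq (gD * di * gA + gB * di * gC) (gA * di * gD + gC * di * gB)"
proof -
  have "heq (gD * di * gA - gC * di * gB) (gA * di * gD - gB * di * gC)" by (rule heq_trans[OF R8 heq_sym[OF R7]])
  from heq_add[OF this heq_refl[of "gC * di * gB + gB * di * gC"]]
  show ?thesis by (rule heq_cong_eq) (simp_all add: algebra_simps)
qed

lemma ceq_U'W': "ceq [U', W'] [W', U']"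
  unfolding ceq_def
proof
  fix i :: nat
  consider "i = 0" | "i = 1" | "i = 2" | "i > 2" by linarith
  then show "heq (cf [U', W'] i) (cf [W', U'] i)"
  proof cases
    case 1 then show ?thesis using heq_uminus[OF heq_mult[OF R9 heq_refl[of di]]] by (simp add: algebra_simps)
  next
    case 2 then show ?thesis using heq_mult[OF heq_ad' heq_refl[of di]] by (simp add: algebra_simps)
  next
    case 3 then show ?thesis using heq_uminus[OF heq_mult[OF heq_sym[OF R10] heq_refl[of di]]] by (simp add: algebra_simps)
  qed simp
qed




declare cf.simps(2)[simp del]

lemma heq_dd: "heq (x * (dl * di) * y) (x * y)"
  using heq_mult[OF heq_mult[OF heq_refl[of x] R5] heq_refl[of y]] by simp
lemma heq_dd': "heq (x * (di * dl) * y) (x * y)"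
  using heq_mult[OF heq_mult[OF heq_refl[of x] R6] heq_refl[of y]] by simp

lemma core1: "heq (Ai * dl * di * (gA * Bm + gB * Bl) - Am * dl * di * (gC * Bm + gD * Bl))
   ((Am * Sinv_gen GC + Ai * Sinv_gen GD) * dl * Bm - (Am * Sinv_gen GA + Ai * Sinv_gen GB) * dl * Bl)"
proof -
  let ?E = "Ai * (gA * Bm + gB * Bl) - Am * (gC * Bm + gD * Bl)"
  have 1: "heq (Ai * dl * di * (gA * Bm + gB * Bl) - Am * dl * di * (gC * Bm + gD * Bl)) ?E"
    using heq_diff[OF heq_dd[of Ai "gA * Bm + gB * Bl"] heq_dd[of Am "gC * Bm + gD * Bl"]]
    by (simp add: mult.assoc)
  have 2: "heq ((Ai * gA) * (di * dl) * Bm + (Ai * gB) * (di * dl) * Bl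
               - ((Am * gC) * (di * dl) * Bm + (Am * gD) * (di * dl) * Bl))
             ((Ai * gA) * Bm + (Ai * gB) * Bl - ((Am * gC) * Bm + (Am * gD) * Bl))"
    by (intro heq_diff heq_add heq_dd')
  have 3: "heq ((Am * Sinv_gen GC + Ai * Sinv_gen GD) * dl * Bm - (Am * Sinv_gen GA + Ai * Sinv_gen GB) * dl * Bl) ?E"
    by (rule heq_cong_eq[OF 2]) (simp_all add: algebra_simps)
  show ?thesis by (rule heq_trans[OF 1 heq_sym[OF 3]])
qed

lemma core2: "heq ((Bm * gC + Bl * gD) * di * (Am * dl) - (Bm * gA + Bl * gB) * di * (Ai * dl))
  (Bl * ((Sinv_gen GA * Am + Sinv_gen GB * Ai) * dl) - Bm * ((Sinv_gen GC * Am + Sinv_gen GD * Ai) * dl))"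
  by (rule heq_eqI) (simp add: algebra_simps)

definition AL :: "nat \<Rightarrow> nat \<Rightarrow> ('k::ring_1 fa \<times> 'k fa) list" where
  "AL n k = replicate (n - k) W' @ replicate k U'"
definition BL :: "nat \<Rightarrow> nat \<Rightarrow> ('k::ring_1 fa \<times> 'k fa) list" where
  "BL n j = replicate j U @ replicate (n - j) W"

lemma X_n: "j \<le> n \<Longrightarrow> SnV_coeff n l j = cf (BL n j) l"
  by (simp add: SnV_cf BL_def)
lemma X_nm: "j \<le> n \<Longrightarrow> (if l = 0 then 0 else SnV_coeff n (l-1) j) = cfm (BL n j) l"
  by (simp add: SnV_cf BL_def cfm_def)
lemma S_n: "k \<le> n \<Longrightarrow> Sinv (SnV_coeff n i k) = cf (AL n k) i"
  by (simp add: SnV_Sinv AL_def)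
lemma S_nm: "k \<le> n \<Longrightarrow> (if i = 0 then 0 else Sinv (SnV_coeff n (i-1) k)) = cfm (AL n k) i"
  by (simp add: SnV_Sinv AL_def cfm_def)

lemma X_Suc_Suc: "j \<le> n \<Longrightarrow> SnV_coeff (Suc n) l (Suc j) = gA * cfm (BL n j) l + gB * cf (BL n j) l"
  by (simp add: SnV_cf BL_def cf_Cons)
lemma X_Suc_snoc: "j \<le> n \<Longrightarrow> SnV_coeff (Suc n) l j = cfm (BL n j) l * gC + cf (BL n j) l * gD"
proof -
  assume j: "j \<le> n"
  have e: "replicate j U @ replicate (Suc n - j) W = BL n j @ [W]"
    using j by (simp add: BL_def Suc_diff_le replicate_append_same)
  have "SnV_coeff (Suc n) l j = cf (replicate j U @ replicate (Suc n - j) W) l"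
    using j by (intro SnV_cf) simp
  also have "\<dots> = cf (BL n j @ [W]) l" by (simp only: e)
  finally show ?thesis by (simp only: cf_snoc)
qed
lemma X_Suc_W: "j \<le> n \<Longrightarrow> heq (SnV_coeff (Suc n) l j) (gC * cfm (BL n j) l + gD * cf (BL n j) l)"
proof -
  assume j: "j \<le> n"
  have c: "ceq ([] @ W # replicate j U @ replicate (n-j) W) ([] @ replicate j U @ W # replicate (n-j) W)"
    by (rule ceq_swap[OF ceq_sym[OF ceq_UW]])
  have e: "[] @ replicate j U @ W # replicate (n-j) W = replicate j U @ replicate (Suc n - j) W"
    using j by (simp add: Suc_diff_le)
  have e2: "[] @ W # replicate j U @ replicate (n-j) W = W # BL n j" by (simp add: BL_def)
  have "SnV_coeff (Suc n) l j = cf (replicate j U @ replicate (Suc n - j) W) l"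
    using j by (intro SnV_cf) simp
  moreover have "heq (cf (replicate j U @ replicate (Suc n - j) W) l) (cf (W # BL n j) l)"
    using ceq_cf[OF ceq_sym[OF c[unfolded e e2]]] .
  ultimately show ?thesis unfolding cf_Cons by metis
qed
lemma X_Suc_U: "j \<le> n \<Longrightarrow> heq (SnV_coeff (Suc n) l (Suc j)) (cfm (BL n j) l * gA + cf (BL n j) l * gB)"
proof -
  assume j: "j \<le> n"
  have c: "ceq (replicate j U @ U # replicate (n-j) W @ []) (replicate j U @ replicate (n-j) W @ U # [])"
    by (rule ceq_swap[OF ceq_UW])
  have e: "replicate j U @ U # replicate (n-j) W @ [] = replicate (Suc j) U @ replicate (Suc n - Suc j) W"
    by (simp add: replicate_append_same[symmetric])
  have e2: "replicate j U @ replicate (n-j) W @ U # [] = BL n j @ [U]" by (simp add: BL_def)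
  have "SnV_coeff (Suc n) l (Suc j) = cf (replicate (Suc j) U @ replicate (Suc n - Suc j) W) l"
    using j by (intro SnV_cf) simp
  moreover have "heq (cf (replicate (Suc j) U @ replicate (Suc n - Suc j) W) l) (cf (BL n j @ [U]) l)"
    using ceq_cf[OF c[unfolded e e2]] .
  ultimately show ?thesis unfolding cf_snoc by metis
qed

lemma S_Suc_W: "k \<le> n \<Longrightarrow> Sinv (SnV_coeff (Suc n) i k) = Sinv_gen GC * cfm (AL n k) i + Sinv_gen GD * cf (AL n k) i"
proof -
  assume k: "k \<le> n"
  have e: "replicate (Suc n - k) W' @ replicate k U' = W' # AL n k"
    using k by (simp add: AL_def Suc_diff_le)
  have "Sinv (SnV_coeff (Suc n) i k) = cf (replicate (Suc n - k) W' @ replicate k U') i"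
    using k by (intro SnV_Sinv) simp
  also have "\<dots> = cf (W' # AL n k) i" by (simp only: e)
  finally show ?thesis by (simp only: cf_Cons)
qed
lemma S_Suc_U: "k \<le> n \<Longrightarrow> Sinv (SnV_coeff (Suc n) i (Suc k)) = cfm (AL n k) i * Sinv_gen GA + cf (AL n k) i * Sinv_gen GB"
proof -
  assume k: "k \<le> n"
  have e: "replicate (Suc n - Suc k) W' @ replicate (Suc k) U' = AL n k @ [U']"
    by (simp add: AL_def replicate_append_same)
  have "Sinv (SnV_coeff (Suc n) i (Suc k)) = cf (replicate (Suc n - Suc k) W' @ replicate (Suc k) U') i"
    using k by (intro SnV_Sinv) simp
  also have "\<dots> = cf (AL n k @ [U']) i" by (simp only: e)
  finally show ?thesis by (simp only: cf_snoc)
qed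
lemma S_Suc_W': "k \<le> n \<Longrightarrow> heq (Sinv (SnV_coeff (Suc n) i k)) (cfm (AL n k) i * Sinv_gen GC + cf (AL n k) i * Sinv_gen GD)"
proof -
  assume k: "k \<le> n"
  have c: "ceq (replicate (n-k) W' @ W' # replicate k U' @ []) (replicate (n-k) W' @ replicate k U' @ W' # [])"
    by (rule ceq_swap[OF ceq_sym[OF ceq_U'W']])
  have e: "replicate (n-k) W' @ W' # replicate k U' @ [] = replicate (Suc n - k) W' @ replicate k U'"
    using k by (simp add: Suc_diff_le replicate_append_same[symmetric])
  have e2: "replicate (n-k) W' @ replicate k U' @ W' # [] = AL n k @ [W']" by (simp add: AL_def)
  have "Sinv (SnV_coeff (Suc n) i k) = cf (replicate (Suc n - k) W' @ replicate k U') i"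
    using k by (intro SnV_Sinv) simp
  moreover have "heq (cf (replicate (Suc n - k) W' @ replicate k U') i) (cf (AL n k @ [W']) i)"
    using ceq_cf[OF c[unfolded e e2]] .
  ultimately show ?thesis unfolding cf_snoc by metis
qed
lemma S_Suc_U': "k \<le> n \<Longrightarrow> heq (Sinv (SnV_coeff (Suc n) i (Suc k))) (Sinv_gen GA * cfm (AL n k) i + Sinv_gen GB * cf (AL n k) i)"
proof -
  assume k: "k \<le> n"
  have c: "ceq ([] @ U' # replicate (n-k) W' @ replicate k U') ([] @ replicate (n-k) W' @ U' # replicate k U')"
    by (rule ceq_swap[OF ceq_U'W'])
  have e: "[] @ replicate (n-k) W' @ U' # replicate k U' = replicate (Suc n - Suc k) W' @ replicate (Suc k) U'"
    by simp
  have e2: "[] @ U' # replicate (n-k) W' @ replicate k U' = U' # AL n k" by (simp add: AL_def)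
  have "Sinv (SnV_coeff (Suc n) i (Suc k)) = cf (replicate (Suc n - Suc k) W' @ replicate (Suc k) U') i"
    using k by (intro SnV_Sinv) simp
  moreover have "heq (cf (replicate (Suc n - Suc k) W' @ replicate (Suc k) U') i) (cf (U' # AL n k) i)"
    using ceq_cf[OF ceq_sym[OF c[unfolded e e2]]] .
  ultimately show ?thesis unfolding cf_Cons by metis
qed

lemma entry1: assumes "k \<le> n" "j \<le> n"
  shows "heq (Sinv (SnV_coeff n i k) * dl * di * SnV_coeff (Suc n) l (Suc j)
           - (if i = 0 then 0 else Sinv (SnV_coeff n (i-1) k)) * dl * di * SnV_coeff (Suc n) l j)
         (Sinv (SnV_coeff (Suc n) i k) * dl * (if l = 0 then 0 else SnV_coeff n (l-1) j)
           - Sinv (SnV_coeff (Suc n) i (Suc k)) * dl * SnV_coeff n l j)"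
proof -
  have L: "heq (Sinv (SnV_coeff n i k) * dl * di * SnV_coeff (Suc n) l (Suc j)
           - (if i = 0 then 0 else Sinv (SnV_coeff n (i-1) k)) * dl * di * SnV_coeff (Suc n) l j)
     (cf (AL n k) i * dl * di * (gA * cfm (BL n j) l + gB * cf (BL n j) l)
       - cfm (AL n k) i * dl * di * (gC * cfm (BL n j) l + gD * cf (BL n j) l))"
    unfolding S_nm[OF assms(1)] unfolding S_n[OF assms(1)] X_Suc_Suc[OF assms(2)]
    by (intro heq_diff heq_mult heq_refl X_Suc_W assms)
  have R: "heq (Sinv (SnV_coeff (Suc n) i k) * dl * (if l = 0 then 0 else SnV_coeff n (l-1) j)
           - Sinv (SnV_coeff (Suc n) i (Suc k)) * dl * SnV_coeff n l j)
     ((cfm (AL n k) i * Sinv_gen GC + cf (AL n k) i * Sinv_gen GD) * dl * cfm (BL n j) l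
       - (cfm (AL n k) i * Sinv_gen GA + cf (AL n k) i * Sinv_gen GB) * dl * cf (BL n j) l)"
    unfolding X_nm[OF assms(2)] unfolding X_n[OF assms(2)] S_Suc_U[OF assms(1)]
    by (intro heq_diff heq_mult heq_refl S_Suc_W' assms)
  show ?thesis by (rule heq_trans[OF L heq_trans[OF core1 heq_sym[OF R]]])
qed

lemma entry2: assumes "k \<le> n" "j \<le> n"
  shows "heq ((if i = 0 then 0 else SnV_coeff (Suc n) l j * di * (Sinv (SnV_coeff n (i-1) k) * dl))
            - SnV_coeff (Suc n) l (Suc j) * di * (Sinv (SnV_coeff n i k) * dl))
         (SnV_coeff n l j * (Sinv (SnV_coeff (Suc n) i (Suc k)) * dl)
            - (if l = 0 then 0 else SnV_coeff n (l-1) j * (Sinv (SnV_coeff (Suc n) i k) * dl)))"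
proof -
  have e1: "(if i = 0 then 0 else SnV_coeff (Suc n) l j * di * (Sinv (SnV_coeff n (i-1) k) * dl))
      = SnV_coeff (Suc n) l j * di * ((if i = 0 then 0 else Sinv (SnV_coeff n (i-1) k)) * dl)" by simp
  have e2: "(if l = 0 then 0 else SnV_coeff n (l-1) j * (Sinv (SnV_coeff (Suc n) i k) * dl))
      = (if l = 0 then 0 else SnV_coeff n (l-1) j) * (Sinv (SnV_coeff (Suc n) i k) * dl)" by simp
  have L: "heq ((if i = 0 then 0 else SnV_coeff (Suc n) l j * di * (Sinv (SnV_coeff n (i-1) k) * dl))
            - SnV_coeff (Suc n) l (Suc j) * di * (Sinv (SnV_coeff n i k) * dl))
     ((cfm (BL n j) l * gC + cf (BL n j) l * gD) * di * (cfm (AL n k) i * dl)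
       - (cfm (BL n j) l * gA + cf (BL n j) l * gB) * di * (cf (AL n k) i * dl))"
    unfolding e1 S_nm[OF assms(1)] unfolding S_n[OF assms(1)] X_Suc_snoc[OF assms(2)]
    by (intro heq_diff heq_mult heq_refl X_Suc_U assms)
  have R: "heq (SnV_coeff n l j * (Sinv (SnV_coeff (Suc n) i (Suc k)) * dl)
            - (if l = 0 then 0 else SnV_coeff n (l-1) j * (Sinv (SnV_coeff (Suc n) i k) * dl)))
     (cf (BL n j) l * ((Sinv_gen GA * cfm (AL n k) i + Sinv_gen GB * cf (AL n k) i) * dl)
       - cfm (BL n j) l * ((Sinv_gen GC * cfm (AL n k) i + Sinv_gen GD * cf (AL n k) i) * dl))"
    unfolding e2 X_nm[OF assms(2)] unfolding X_n[OF assms(2)] S_Suc_W[OF assms(1)]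
    by (intro heq_diff heq_mult heq_refl S_Suc_U' assms)
  show ?thesis by (rule heq_trans[OF L heq_trans[OF core2 heq_sym[OF R]]])
qed




lemma sum_pairs: fixes m1 m2 :: nat shows "(\<Sum>r<m1*m2. F r) = (\<Sum>x<m1. \<Sum>y<m2. F (x*m2+y))"
proof (induction m1)
  case 0 then show ?case by simp
next
  case (Suc m1)
  have "(\<Sum>r<Suc m1*m2. F r) = (\<Sum>r\<in>{0..<m1*m2}. F r) + (\<Sum>r\<in>{m1*m2..<m1*m2+m2}. F r)"
    by (simp add: lessThan_atLeast0 sum.atLeastLessThan_concat add.commute)
  also have "(\<Sum>r\<in>{m1*m2..<m1*m2+m2}. F r) = (\<Sum>y<m2. F (m1*m2+y))"
    using sum.shift_bounds_nat_ivl[of F 0 "m1*m2" m2]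
    by (simp add: lessThan_atLeast0 add.commute)
  finally show ?case using Suc by (simp add: lessThan_atLeast0)
qed

lemma dm_div: fixes m :: nat shows "y < m \<Longrightarrow> (x*m+y) div m = x" by simp
lemma dm_mod: fixes m :: nat shows "y < m \<Longrightarrow> (x*m+y) mod m = y" by simp

lemma dsum_delta: fixes G :: "nat \<Rightarrow> nat \<Rightarrow> 'b::comm_monoid_add"
  shows "(\<Sum>x<m1. \<Sum>y<m2. if C \<and> x = x0 \<and> y = y0 then G x y else 0) = (if C \<and> x0 < m1 \<and> y0 < m2 then G x0 y0 else 0)"
proof -
  have "(\<Sum>x<m1. \<Sum>y<m2. if C \<and> x = x0 \<and> y = y0 then G x y else 0)
      = (\<Sum>x<m1. if x = x0 then (if C \<and> y0 < m2 then G x0 y0 else 0) else 0)"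
    by (rule sum.cong) (auto simp: sum.delta')
  also have "\<dots> = (if C \<and> x0 < m1 \<and> y0 < m2 then G x0 y0 else 0)"
    by (simp add: sum.delta')
  finally show ?thesis .
qed

lemma mult_if1: "(x::'b::ring_1) * (if P then 1 else 0) = (if P then x else 0)" by simp
lemma if1_mult: "(if P then 1 else 0) * (x::'b::ring_1) = (if P then x else 0)" by simp

lemma sparse_right: fixes G :: "nat \<Rightarrow> nat \<Rightarrow> 'b::ring_1"
  shows "(\<Sum>x<m1. \<Sum>y<m2. G x y * ((if C1 \<and> x = x1 \<and> y = y1 then 1 else 0) - (if C2 \<and> x = x2 \<and> y = y2 then 1 else 0)))
   = (if C1 \<and> x1 < m1 \<and> y1 < m2 then G x1 y1 else 0) - (if C2 \<and> x2 < m1 \<and> y2 < m2 then G x2 y2 else 0)"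
proof -
  have "(\<Sum>x<m1. \<Sum>y<m2. G x y * ((if C1 \<and> x = x1 \<and> y = y1 then 1 else 0) - (if C2 \<and> x = x2 \<and> y = y2 then 1 else 0)))
    = (\<Sum>x<m1. \<Sum>y<m2. if C1 \<and> x = x1 \<and> y = y1 then G x y else 0)
     - (\<Sum>x<m1. \<Sum>y<m2. if C2 \<and> x = x2 \<and> y = y2 then G x y else 0)"
    by (simp add: right_diff_distrib sum_subtractf mult_if1 del: mult_zero_right mult_1_right)
  thus ?thesis by (simp only: dsum_delta)
qed

lemma sparse_left: fixes G :: "nat \<Rightarrow> nat \<Rightarrow> 'b::ring_1"
  shows "(\<Sum>x<m1. \<Sum>y<m2. ((if C1 \<and> x = x1 \<and> y = y1 then 1 else 0) - (if C2 \<and> x = x2 \<and> y = y2 then 1 else 0)) * G x y)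
   = (if C1 \<and> x1 < m1 \<and> y1 < m2 then G x1 y1 else 0) - (if C2 \<and> x2 < m1 \<and> y2 < m2 then G x2 y2 else 0)"
proof -
  have "(\<Sum>x<m1. \<Sum>y<m2. ((if C1 \<and> x = x1 \<and> y = y1 then 1 else 0) - (if C2 \<and> x = x2 \<and> y = y2 then 1 else 0)) * G x y)
    = (\<Sum>x<m1. \<Sum>y<m2. if C1 \<and> x = x1 \<and> y = y1 then G x y else 0)
     - (\<Sum>x<m1. \<Sum>y<m2. if C2 \<and> x = x2 \<and> y = y2 then G x y else 0)"
    by (simp add: left_diff_distrib sum_subtractf if1_mult del: mult_zero_left mult_1_left)
  thus ?thesis by (simp only: dsum_delta)
qed

lemma fconst_w: "fconst ((if A then 1 else 0) - (if B then 1 else 0)) = (if A then 1 else 0) - (if B then 1 else 0)"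
  by (simp add: fconst_diff)




lemma SnV_zero: "j \<le> n \<Longrightarrow> n < i \<Longrightarrow> SnV_coeff n i j = 0"
  by (simp add: X_n cf_beyond BL_def)
lemma Sinv_SnV_zero: "k \<le> n \<Longrightarrow> n < i \<Longrightarrow> Sinv (SnV_coeff n i k) = 0"
  by (simp add: S_n cf_beyond AL_def)

lemma TnV_eq: "TnV m = (Suc m, \<lambda>p q. Sinv (SnV_coeff m q p) * dl)"
  by (simp add: TnV_def ctensor_def cdual_def SnV_def cR_def)

lemma LHS1: "ctensor (TnV (Suc n)) (SnV n) = (Suc (Suc n) * Suc n, \<lambda>p q.
   Sinv (SnV_coeff (Suc n) (q div Suc n) (p div Suc n)) * dl * SnV_coeff n (p mod Suc n) (q mod Suc n))"
  by (simp add: TnV_eq ctensor_def SnV_def)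
lemma RHS1: "ctensor (ctensor (TnV n) cRinv) (SnV (Suc n)) = (Suc n * Suc (Suc n), \<lambda>p q.
   Sinv (SnV_coeff n (q div Suc (Suc n)) (p div Suc (Suc n))) * dl * di * SnV_coeff (Suc n) (p mod Suc (Suc n)) (q mod Suc (Suc n)))"
  by (simp add: TnV_eq ctensor_def SnV_def cRinv_def)

definition P1 :: "nat \<Rightarrow> nat \<Rightarrow> nat \<Rightarrow> 'k::field" where
  "P1 n r c = (let k = r div Suc (Suc n); l = r mod Suc (Suc n); i = c div Suc n; j = c mod Suc n in
     (if k = i \<and> l = Suc j then 1 else 0) - (if Suc k = i \<and> l = j then 1 else 0))"

definition Q1f :: "nat \<Rightarrow> nat \<Rightarrow> nat \<Rightarrow> nat \<Rightarrow> 'k::field" where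
  "Q1f i j k l = (if i + l = Suc (k + j) then (if l \<le> k then (if l \<le> j then -1 else 0) else (if j < l then 1 else 0)) else 0)"

definition Q1 :: "nat \<Rightarrow> nat \<Rightarrow> nat \<Rightarrow> 'k::field" where
  "Q1 n c r = Q1f (c div Suc n) (c mod Suc n) (r div Suc (Suc n)) (r mod Suc (Suc n))"

lemma P1_col: "y < Suc (Suc n) \<Longrightarrow> P1 n (x * Suc (Suc n) + y) c =
   (if True \<and> x = c div Suc n \<and> y = Suc (c mod Suc n) then 1 else 0)
   - (if c div Suc n \<noteq> 0 \<and> x = c div Suc n - 1 \<and> y = c mod Suc n then 1 else 0)"
  unfolding P1_def Let_def dm_div dm_mod by auto

lemma P1_row: "y < Suc n \<Longrightarrow> P1 n q (x * Suc n + y) =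
   (if q mod Suc (Suc n) \<noteq> 0 \<and> x = q div Suc (Suc n) \<and> y = q mod Suc (Suc n) - 1 then 1 else 0)
   - (if True \<and> x = Suc (q div Suc (Suc n)) \<and> y = q mod Suc (Suc n) then 1 else 0)"
  unfolding P1_def Let_def dm_div dm_mod by auto




lemma WP1: fixes n q c :: nat
  defines "k \<equiv> q div Suc (Suc n)" and "l \<equiv> q mod Suc (Suc n)" and "i \<equiv> c div Suc n" and "j \<equiv> c mod Suc n"
  assumes q: "q < Suc n * Suc (Suc n)" and c: "c < Suc (Suc n) * Suc n"
  shows "(\<Sum>r < Suc (Suc n) * Suc n. Sinv (SnV_coeff n (r div Suc (Suc n)) (q div Suc (Suc n))) * dl * di
            * SnV_coeff (Suc n) (q mod Suc (Suc n)) (r mod Suc (Suc n)) * fconst (P1 n r c :: 'k::field))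
   = Sinv (SnV_coeff n i k) * dl * di * SnV_coeff (Suc n) l (Suc j)
      - (if i = 0 then 0 else Sinv (SnV_coeff n (i-1) k)) * dl * di * SnV_coeff (Suc n) l j"
proof -
  have kn: "k \<le> n" using less_mult_imp_div_less[OF q] unfolding k_def by simp
  have jn: "j \<le> n" unfolding j_def by (simp add: less_Suc_eq_le)
  have in_: "i \<le> Suc n" using less_mult_imp_div_less[OF c] unfolding i_def by simp
  let ?G = "\<lambda>x y. Sinv (SnV_coeff n x k) * dl * di * SnV_coeff (Suc n) l y"
  have "(\<Sum>r < Suc (Suc n) * Suc n. Sinv (SnV_coeff n (r div Suc (Suc n)) (q div Suc (Suc n))) * dl * di
            * SnV_coeff (Suc n) (q mod Suc (Suc n)) (r mod Suc (Suc n)) * fconst (P1 n r c :: 'k::field))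
     = (\<Sum>x<Suc n. \<Sum>y<Suc (Suc n). ?G x y *
          ((if True \<and> x = i \<and> y = Suc j then 1 else 0) - (if i \<noteq> 0 \<and> x = i - 1 \<and> y = j then 1 else 0)))"
    unfolding mult.commute[of "Suc (Suc n)" "Suc n"] sum_pairs
    by (intro sum.cong refl, simp only: lessThan_iff dm_div dm_mod P1_col fconst_w k_def l_def i_def j_def)
  also have "\<dots> = (if True \<and> i < Suc n \<and> Suc j < Suc (Suc n) then ?G i (Suc j) else 0)
        - (if i \<noteq> 0 \<and> i - 1 < Suc n \<and> j < Suc (Suc n) then ?G (i - 1) j else 0)"
    by (rule sparse_right)
  also have "\<dots> = ?G i (Suc j) - (if i = 0 then 0 else ?G (i-1) j)"
    using kn jn in_ by (auto simp: Sinv_SnV_zero[OF kn])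
  finally show ?thesis by simp
qed

lemma PV1: fixes n q c :: nat
  defines "k \<equiv> q div Suc (Suc n)" and "l \<equiv> q mod Suc (Suc n)" and "i \<equiv> c div Suc n" and "j \<equiv> c mod Suc n"
  assumes q: "q < Suc n * Suc (Suc n)" and c: "c < Suc (Suc n) * Suc n"
  shows "(\<Sum>r < Suc (Suc n) * Suc n. fconst (P1 n q r :: 'k::field) *
           (Sinv (SnV_coeff (Suc n) (c div Suc n) (r div Suc n)) * dl * SnV_coeff n (r mod Suc n) (c mod Suc n)))
   = Sinv (SnV_coeff (Suc n) i k) * dl * (if l = 0 then 0 else SnV_coeff n (l-1) j)
      - Sinv (SnV_coeff (Suc n) i (Suc k)) * dl * SnV_coeff n l j"
proof -
  have kn: "k \<le> n" using less_mult_imp_div_less[OF q] unfolding k_def by simp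
  have jn: "j \<le> n" unfolding j_def by (simp add: less_Suc_eq_le)
  have ln: "l \<le> Suc n" unfolding l_def by (simp add: less_Suc_eq_le)
  let ?G = "\<lambda>x y. Sinv (SnV_coeff (Suc n) i x) * dl * SnV_coeff n y j"
  have "(\<Sum>r < Suc (Suc n) * Suc n. fconst (P1 n q r :: 'k::field) *
           (Sinv (SnV_coeff (Suc n) (c div Suc n) (r div Suc n)) * dl * SnV_coeff n (r mod Suc n) (c mod Suc n)))
     = (\<Sum>x<Suc (Suc n). \<Sum>y<Suc n.
          ((if l \<noteq> 0 \<and> x = k \<and> y = l - 1 then 1 else 0) - (if True \<and> x = Suc k \<and> y = l then 1 else 0)) * ?G x y)"
    unfolding sum_pairs
    by (intro sum.cong refl, simp only: lessThan_iff dm_div dm_mod P1_row fconst_w k_def l_def i_def j_def)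
  also have "\<dots> = (if l \<noteq> 0 \<and> k < Suc (Suc n) \<and> l - 1 < Suc n then ?G k (l - 1) else 0)
        - (if True \<and> Suc k < Suc (Suc n) \<and> l < Suc n then ?G (Suc k) l else 0)"
    by (rule sparse_left)
  also have "\<dots> = (if l = 0 then 0 else ?G k (l - 1)) - ?G (Suc k) l"
    using kn jn ln by (auto simp: SnV_zero[OF jn])
  finally show ?thesis by simp
qed




lemma arithPQ: fixes k l k' l' n :: nat
  assumes "k \<le> n" "l \<le> Suc n" "k' \<le> n" "l' \<le> Suc n"
  shows "(if l \<noteq> 0 \<and> k < Suc (Suc n) \<and> l - 1 < Suc n then Q1f k (l-1) k' l' else 0)
     - (if True \<and> Suc k < Suc (Suc n) \<and> l < Suc n then Q1f (Suc k) l k' l' else 0)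
     = (if k = k' \<and> l = l' then 1 else (0::'k::field))"
  using assms unfolding Q1f_def by (auto split: if_splits)

lemma arithQP: fixes i j i' j' n :: nat
  assumes "i \<le> Suc n" "j \<le> n" "i' \<le> Suc n" "j' \<le> n"
  shows "(if True \<and> i' < Suc n \<and> Suc j' < Suc (Suc n) then Q1f i j i' (Suc j') else 0)
     - (if i' \<noteq> 0 \<and> i' - 1 < Suc n \<and> j' < Suc (Suc n) then Q1f i j (i' - 1) j' else 0)
     = (if i = i' \<and> j = j' then 1 else (0::'k::field))"
  using assms unfolding Q1f_def by (auto split: if_splits)

lemma idx_eq: fixes m q q' :: nat shows "(q = q') = (q div m = q' div m \<and> q mod m = q' mod m)"
  by (metis div_mult_mod_eq)

lemma PQ1: fixes n q q' :: nat
  assumes q: "q < Suc n * Suc (Suc n)" and q': "q' < Suc n * Suc (Suc n)"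
  shows "(\<Sum>r < Suc (Suc n) * Suc n. P1 n q r * Q1 n r q') = (if q = q' then 1 else (0::'k::field))"
proof -
  define k where "k = q div Suc (Suc n)"
  define l where "l = q mod Suc (Suc n)"
  define k' where "k' = q' div Suc (Suc n)"
  define l' where "l' = q' mod Suc (Suc n)"
  have kn: "k \<le> n" using less_mult_imp_div_less[OF q] unfolding k_def by simp
  have kn': "k' \<le> n" using less_mult_imp_div_less[OF q'] unfolding k'_def by simp
  have ln: "l \<le> Suc n" "l' \<le> Suc n" unfolding l_def l'_def by (simp_all add: less_Suc_eq_le)
  have "(\<Sum>r < Suc (Suc n) * Suc n. P1 n q r * Q1 n r q')
     = (\<Sum>x<Suc (Suc n). \<Sum>y<Suc n.
          ((if l \<noteq> 0 \<and> x = k \<and> y = l - 1 then 1 else 0) - (if True \<and> x = Suc k \<and> y = l then 1 else 0)) * (Q1f x y k' l' :: 'k))"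
    unfolding sum_pairs
    by (intro sum.cong refl, simp only: lessThan_iff dm_div dm_mod P1_row Q1_def k_def l_def k'_def l'_def)
  also have "\<dots> = (if l \<noteq> 0 \<and> k < Suc (Suc n) \<and> l - 1 < Suc n then Q1f k (l-1) k' l' else 0)
     - (if True \<and> Suc k < Suc (Suc n) \<and> l < Suc n then Q1f (Suc k) l k' l' else 0)"
    by (rule sparse_left)
  also have "\<dots> = (if k = k' \<and> l = l' then 1 else 0)"
    by (rule arithPQ[OF kn ln(1) kn' ln(2)])
  finally show ?thesis using idx_eq[of q q' "Suc (Suc n)"] by (simp add: k_def l_def k'_def l'_def)
qed

lemma QP1: fixes n c c' :: nat
  assumes c: "c < Suc (Suc n) * Suc n" and c': "c' < Suc (Suc n) * Suc n"
  shows "(\<Sum>r < Suc (Suc n) * Suc n. Q1 n c r * P1 n r c') = (if c = c' then 1 else (0::'k::field))"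
proof -
  define i where "i = c div Suc n"
  define j where "j = c mod Suc n"
  define i' where "i' = c' div Suc n"
  define j' where "j' = c' mod Suc n"
  have in_: "i \<le> Suc n" using less_mult_imp_div_less[OF c] unfolding i_def by simp
  have in': "i' \<le> Suc n" using less_mult_imp_div_less[OF c'] unfolding i'_def by simp
  have jn: "j \<le> n" "j' \<le> n" unfolding j_def j'_def by (simp_all add: less_Suc_eq_le)
  have "(\<Sum>r < Suc (Suc n) * Suc n. Q1 n c r * P1 n r c')
     = (\<Sum>x<Suc n. \<Sum>y<Suc (Suc n). (Q1f i j x y :: 'k) *
          ((if True \<and> x = i' \<and> y = Suc j' then 1 else 0) - (if i' \<noteq> 0 \<and> x = i' - 1 \<and> y = j' then 1 else 0)))"
    unfolding mult.commute[of "Suc (Suc n)" "Suc n"] sum_pairs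
    by (intro sum.cong refl, simp only: lessThan_iff dm_div dm_mod P1_col Q1_def i_def j_def i'_def j'_def)
  also have "\<dots> = (if True \<and> i' < Suc n \<and> Suc j' < Suc (Suc n) then Q1f i j i' (Suc j') else 0)
     - (if i' \<noteq> 0 \<and> i' - 1 < Suc n \<and> j' < Suc (Suc n) then Q1f i j (i' - 1) j' else 0)"
    by (rule sparse_right)
  also have "\<dots> = (if i = i' \<and> j = j' then 1 else 0)"
    using in_ jn(1) in' jn(2) by (rule arithQP)
  finally show ?thesis using idx_eq[of c c' "Suc n"] by (simp add: i_def j_def i'_def j'_def)
qed

lemma iso1: "comod_iso (ctensor (TnV (Suc n)) (SnV n) :: 'k::field comod)
                   (ctensor (ctensor (TnV n) cRinv) (SnV (Suc n)))"
  unfolding LHS1 RHS1 comod_iso_def prod.case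
proof (rule conjI, simp, rule exI[of _ "P1 n"], rule exI[of _ "Q1 n"], intro conjI allI impI)
  fix q q' assume "q < Suc (Suc n) * Suc n" "q' < Suc (Suc n) * Suc n"
  then show "(\<Sum>l<Suc (Suc n) * Suc n. P1 n q l * Q1 n l q') = (if q = q' then 1 else (0::'k))"
    by (intro PQ1) (simp_all add: mult.commute)
next
  fix c c' assume "c < Suc (Suc n) * Suc n" "c' < Suc (Suc n) * Suc n"
  then show "(\<Sum>l<Suc (Suc n) * Suc n. Q1 n c l * P1 n l c') = (if c = c' then 1 else (0::'k))"
    by (intro QP1)
next
  fix q c assume q: "q < Suc (Suc n) * Suc n" and c: "c < Suc (Suc n) * Suc n"
  have q': "q < Suc n * Suc (Suc n)" using q by (simp add: mult.commute)
  have kn: "q div Suc (Suc n) \<le> n" using less_mult_imp_div_less[OF q'] by simp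
  have jn: "c mod Suc n \<le> n" by (simp add: less_Suc_eq_le)
  show "heq (\<Sum>l<Suc (Suc n) * Suc n.
              Sinv (SnV_coeff n (l div Suc (Suc n)) (q div Suc (Suc n))) * dl * di *
              SnV_coeff (Suc n) (q mod Suc (Suc n)) (l mod Suc (Suc n)) * fconst (P1 n l c :: 'k))
          (\<Sum>l<Suc (Suc n) * Suc n. fconst (P1 n q l :: 'k) *
              (Sinv (SnV_coeff (Suc n) (c div Suc n) (l div Suc n)) * dl * SnV_coeff n (l mod Suc n) (c mod Suc n)))"
    unfolding WP1[OF q' c] PV1[OF q' c] by (rule entry1[OF kn jn])
qed




lemma LHS2: "ctensor (SnV n) (TnV (Suc n)) = (Suc n * Suc (Suc n), \<lambda>p q.
   SnV_coeff n (p div Suc (Suc n)) (q div Suc (Suc n)) * (Sinv (SnV_coeff (Suc n) (q mod Suc (Suc n)) (p mod Suc (Suc n))) * dl))"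
  by (simp add: TnV_eq ctensor_def SnV_def)
lemma RHS2: "ctensor (ctensor (SnV (Suc n)) cRinv) (TnV n) = (Suc (Suc n) * Suc n, \<lambda>p q.
   SnV_coeff (Suc n) (p div Suc n) (q div Suc n) * di * (Sinv (SnV_coeff n (q mod Suc n) (p mod Suc n)) * dl))"
  by (simp add: TnV_eq ctensor_def SnV_def cRinv_def)

definition P2 :: "nat \<Rightarrow> nat \<Rightarrow> nat \<Rightarrow> 'k::field" where
  "P2 n r c = (let l = r div Suc n; k = r mod Suc n; j = c div Suc (Suc n); i = c mod Suc (Suc n) in
     (if l = j \<and> Suc k = i then 1 else 0) - (if l = Suc j \<and> k = i then 1 else 0))"

definition Q2 :: "nat \<Rightarrow> nat \<Rightarrow> nat \<Rightarrow> 'k::field" where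
  "Q2 n c r = - Q1f (c mod Suc (Suc n)) (c div Suc (Suc n)) (r mod Suc n) (r div Suc n)"

lemma P2_col: "y < Suc n \<Longrightarrow> P2 n (x * Suc n + y) c =
   (if c mod Suc (Suc n) \<noteq> 0 \<and> x = c div Suc (Suc n) \<and> y = c mod Suc (Suc n) - 1 then 1 else 0)
   - (if True \<and> x = Suc (c div Suc (Suc n)) \<and> y = c mod Suc (Suc n) then 1 else 0)"
  unfolding P2_def Let_def dm_div dm_mod by auto

lemma P2_row: "y < Suc (Suc n) \<Longrightarrow> P2 n q (x * Suc (Suc n) + y) =
   (if True \<and> x = q div Suc n \<and> y = Suc (q mod Suc n) then 1 else 0)
   - (if q div Suc n \<noteq> 0 \<and> x = q div Suc n - 1 \<and> y = q mod Suc n then 1 else 0)"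
  unfolding P2_def Let_def dm_div dm_mod by auto

lemma WP2: fixes n q c :: nat
  defines "l \<equiv> q div Suc n" and "k \<equiv> q mod Suc n" and "j \<equiv> c div Suc (Suc n)" and "i \<equiv> c mod Suc (Suc n)"
  assumes q: "q < Suc (Suc n) * Suc n" and c: "c < Suc n * Suc (Suc n)"
  shows "(\<Sum>r < Suc n * Suc (Suc n). SnV_coeff (Suc n) (q div Suc n) (r div Suc n) * di *
            (Sinv (SnV_coeff n (r mod Suc n) (q mod Suc n)) * dl) * fconst (P2 n r c :: 'k::field))
   = (if i = 0 then 0 else SnV_coeff (Suc n) l j * di * (Sinv (SnV_coeff n (i-1) k) * dl))
      - SnV_coeff (Suc n) l (Suc j) * di * (Sinv (SnV_coeff n i k) * dl)"
proof -
  have kn: "k \<le> n" unfolding k_def by (simp add: less_Suc_eq_le)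
  have in_: "i \<le> Suc n" unfolding i_def by (simp add: less_Suc_eq_le)
  let ?G = "\<lambda>x y. SnV_coeff (Suc n) l x * di * (Sinv (SnV_coeff n y k) * dl)"
  have "(\<Sum>r < Suc n * Suc (Suc n). SnV_coeff (Suc n) (q div Suc n) (r div Suc n) * di *
            (Sinv (SnV_coeff n (r mod Suc n) (q mod Suc n)) * dl) * fconst (P2 n r c :: 'k::field))
     = (\<Sum>x<Suc (Suc n). \<Sum>y<Suc n. ?G x y *
          ((if i \<noteq> 0 \<and> x = j \<and> y = i - 1 then 1 else 0) - (if True \<and> x = Suc j \<and> y = i then 1 else 0)))"
    unfolding mult.commute[of "Suc n" "Suc (Suc n)"] sum_pairs
    by (intro sum.cong refl, simp only: lessThan_iff dm_div dm_mod P2_col fconst_w k_def l_def i_def j_def)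
  also have "\<dots> = (if i \<noteq> 0 \<and> j < Suc (Suc n) \<and> i - 1 < Suc n then ?G j (i - 1) else 0)
        - (if True \<and> Suc j < Suc (Suc n) \<and> i < Suc n then ?G (Suc j) i else 0)"
    by (rule sparse_right)
  also have "\<dots> = (if i = 0 then 0 else ?G j (i - 1)) - ?G (Suc j) i"
  proof -
    have j: "j \<le> n" using less_mult_imp_div_less[OF c] unfolding j_def by simp
    show ?thesis using kn j in_ by (auto simp: Sinv_SnV_zero[OF kn])
  qed
  finally show ?thesis by simp
qed

lemma PV2: fixes n q c :: nat
  defines "l \<equiv> q div Suc n" and "k \<equiv> q mod Suc n" and "j \<equiv> c div Suc (Suc n)" and "i \<equiv> c mod Suc (Suc n)"
  assumes q: "q < Suc (Suc n) * Suc n" and c: "c < Suc n * Suc (Suc n)"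
  shows "(\<Sum>r < Suc n * Suc (Suc n). fconst (P2 n q r :: 'k::field) *
           (SnV_coeff n (r div Suc (Suc n)) (c div Suc (Suc n)) * (Sinv (SnV_coeff (Suc n) (c mod Suc (Suc n)) (r mod Suc (Suc n))) * dl)))
   = SnV_coeff n l j * (Sinv (SnV_coeff (Suc n) i (Suc k)) * dl)
      - (if l = 0 then 0 else SnV_coeff n (l-1) j * (Sinv (SnV_coeff (Suc n) i k) * dl))"
proof -
  have kn: "k \<le> n" unfolding k_def by (simp add: less_Suc_eq_le)
  have ln: "l \<le> Suc n" using less_mult_imp_div_less[OF q] unfolding l_def by simp
  have jn: "j \<le> n" using less_mult_imp_div_less[OF c] unfolding j_def by simp
  let ?G = "\<lambda>x y. SnV_coeff n x j * (Sinv (SnV_coeff (Suc n) i y) * dl)"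
  have "(\<Sum>r < Suc n * Suc (Suc n). fconst (P2 n q r :: 'k::field) *
           (SnV_coeff n (r div Suc (Suc n)) (c div Suc (Suc n)) * (Sinv (SnV_coeff (Suc n) (c mod Suc (Suc n)) (r mod Suc (Suc n))) * dl)))
     = (\<Sum>x<Suc n. \<Sum>y<Suc (Suc n).
          ((if True \<and> x = l \<and> y = Suc k then 1 else 0) - (if l \<noteq> 0 \<and> x = l - 1 \<and> y = k then 1 else 0)) * ?G x y)"
    unfolding sum_pairs
    by (intro sum.cong refl, simp only: lessThan_iff dm_div dm_mod P2_row fconst_w k_def l_def i_def j_def)
  also have "\<dots> = (if True \<and> l < Suc n \<and> Suc k < Suc (Suc n) then ?G l (Suc k) else 0)
        - (if l \<noteq> 0 \<and> l - 1 < Suc n \<and> k < Suc (Suc n) then ?G (l - 1) k else 0)"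
    by (rule sparse_left)
  also have "\<dots> = ?G l (Suc k) - (if l = 0 then 0 else ?G (l - 1) k)"
    using kn jn ln by (auto simp: SnV_zero[OF jn])
  finally show ?thesis by simp
qed

lemma arithPQ2: fixes k l k' l' n :: nat
  assumes "k \<le> n" "l \<le> Suc n" "k' \<le> n" "l' \<le> Suc n"
  shows "(if True \<and> l < Suc n \<and> Suc k < Suc (Suc n) then - Q1f (Suc k) l k' l' else 0)
     - (if l \<noteq> 0 \<and> l - 1 < Suc n \<and> k < Suc (Suc n) then - Q1f k (l-1) k' l' else 0)
     = (if k = k' \<and> l = l' then 1 else (0::'k::field))"
  using assms unfolding Q1f_def by (auto split: if_splits)

lemma arithQP2: fixes i j i' j' n :: nat
  assumes "i \<le> Suc n" "j \<le> n" "i' \<le> Suc n" "j' \<le> n"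
  shows "(if i' \<noteq> 0 \<and> j' < Suc (Suc n) \<and> i' - 1 < Suc n then - Q1f i j (i' - 1) j' else 0)
     - (if True \<and> Suc j' < Suc (Suc n) \<and> i' < Suc n then - Q1f i j i' (Suc j') else 0)
     = (if i = i' \<and> j = j' then 1 else (0::'k::field))"
  using assms unfolding Q1f_def by (auto split: if_splits)

lemma PQ2: fixes n q q' :: nat
  assumes q: "q < Suc (Suc n) * Suc n" and q': "q' < Suc (Suc n) * Suc n"
  shows "(\<Sum>r < Suc n * Suc (Suc n). P2 n q r * Q2 n r q') = (if q = q' then 1 else (0::'k::field))"
proof -
  define l where "l = q div Suc n"
  define k where "k = q mod Suc n"
  define l' where "l' = q' div Suc n"
  define k' where "k' = q' mod Suc n"
  have ln: "l \<le> Suc n" using less_mult_imp_div_less[OF q] unfolding l_def by simp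
  have ln': "l' \<le> Suc n" using less_mult_imp_div_less[OF q'] unfolding l'_def by simp
  have kn: "k \<le> n" "k' \<le> n" unfolding k_def k'_def by (simp_all add: less_Suc_eq_le)
  have "(\<Sum>r < Suc n * Suc (Suc n). P2 n q r * Q2 n r q')
     = (\<Sum>x<Suc n. \<Sum>y<Suc (Suc n).
          ((if True \<and> x = l \<and> y = Suc k then 1 else 0) - (if l \<noteq> 0 \<and> x = l - 1 \<and> y = k then 1 else 0)) * (- Q1f y x k' l' :: 'k))"
    unfolding sum_pairs
    by (intro sum.cong refl, simp only: lessThan_iff dm_div dm_mod P2_row Q2_def k_def l_def k'_def l'_def)
  also have "\<dots> = (if True \<and> l < Suc n \<and> Suc k < Suc (Suc n) then - Q1f (Suc k) l k' l' else 0)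
     - (if l \<noteq> 0 \<and> l - 1 < Suc n \<and> k < Suc (Suc n) then - Q1f k (l-1) k' l' else 0)"
    by (rule sparse_left)
  also have "\<dots> = (if k = k' \<and> l = l' then 1 else 0)"
    by (rule arithPQ2[OF kn(1) ln kn(2) ln'])
  finally show ?thesis using idx_eq[of q q' "Suc n"] by (auto simp: k_def l_def k'_def l'_def)
qed

lemma QP2: fixes n c c' :: nat
  assumes c: "c < Suc n * Suc (Suc n)" and c': "c' < Suc n * Suc (Suc n)"
  shows "(\<Sum>r < Suc n * Suc (Suc n). Q2 n c r * P2 n r c') = (if c = c' then 1 else (0::'k::field))"
proof -
  define j where "j = c div Suc (Suc n)"
  define i where "i = c mod Suc (Suc n)"
  define j' where "j' = c' div Suc (Suc n)"
  define i' where "i' = c' mod Suc (Suc n)"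
  have jn: "j \<le> n" using less_mult_imp_div_less[OF c] unfolding j_def by simp
  have jn': "j' \<le> n" using less_mult_imp_div_less[OF c'] unfolding j'_def by simp
  have in_: "i \<le> Suc n" "i' \<le> Suc n" unfolding i_def i'_def by (simp_all add: less_Suc_eq_le)
  have "(\<Sum>r < Suc n * Suc (Suc n). Q2 n c r * P2 n r c')
     = (\<Sum>x<Suc (Suc n). \<Sum>y<Suc n. (- Q1f i j y x :: 'k) *
          ((if i' \<noteq> 0 \<and> x = j' \<and> y = i' - 1 then 1 else 0) - (if True \<and> x = Suc j' \<and> y = i' then 1 else 0)))"
    unfolding mult.commute[of "Suc n" "Suc (Suc n)"] sum_pairs
    by (intro sum.cong refl, simp only: lessThan_iff dm_div dm_mod P2_col Q2_def i_def j_def i'_def j'_def)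
  also have "\<dots> = (if i' \<noteq> 0 \<and> j' < Suc (Suc n) \<and> i' - 1 < Suc n then - Q1f i j (i' - 1) j' else 0)
     - (if True \<and> Suc j' < Suc (Suc n) \<and> i' < Suc n then - Q1f i j i' (Suc j') else 0)"
    by (rule sparse_right)
  also have "\<dots> = (if i = i' \<and> j = j' then 1 else 0)"
    by (rule arithQP2[OF in_(1) jn in_(2) jn'])
  finally show ?thesis using idx_eq[of c c' "Suc (Suc n)"] by (auto simp: i_def j_def i'_def j'_def)
qed

lemma iso2: "comod_iso (ctensor (SnV n) (TnV (Suc n)) :: 'k::field comod)
                   (ctensor (ctensor (SnV (Suc n)) cRinv) (TnV n))"
  unfolding LHS2 RHS2 comod_iso_def prod.case
proof (rule conjI, simp, rule exI[of _ "P2 n"], rule exI[of _ "Q2 n"], intro conjI allI impI)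
  fix q q' assume "q < Suc n * Suc (Suc n)" "q' < Suc n * Suc (Suc n)"
  then show "(\<Sum>l<Suc n * Suc (Suc n). P2 n q l * Q2 n l q') = (if q = q' then 1 else (0::'k))"
    by (intro PQ2) (simp_all add: mult.commute)
next
  fix c c' assume "c < Suc n * Suc (Suc n)" "c' < Suc n * Suc (Suc n)"
  then show "(\<Sum>l<Suc n * Suc (Suc n). Q2 n c l * P2 n l c') = (if c = c' then 1 else (0::'k))"
    by (intro QP2)
next
  fix q c assume q: "q < Suc n * Suc (Suc n)" and c: "c < Suc n * Suc (Suc n)"
  have q': "q < Suc (Suc n) * Suc n" using q by (simp add: mult.commute)
  have kn: "q mod Suc n \<le> n" by (simp add: less_Suc_eq_le)
  have jn: "c div Suc (Suc n) \<le> n" using less_mult_imp_div_less[OF c] by simp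
  show "heq (\<Sum>l<Suc n * Suc (Suc n).
              SnV_coeff (Suc n) (q div Suc n) (l div Suc n) * di *
              (Sinv (SnV_coeff n (l mod Suc n) (q mod Suc n)) * dl) * fconst (P2 n l c :: 'k))
          (\<Sum>l<Suc n * Suc (Suc n). fconst (P2 n q l :: 'k) *
              (SnV_coeff n (l div Suc (Suc n)) (c div Suc (Suc n)) *
               (Sinv (SnV_coeff (Suc n) (c mod Suc (Suc n)) (l mod Suc (Suc n))) * dl)))"
    unfolding WP2[OF q' c] PV2[OF q' c] by (rule entry2[OF kn jn])
qed


theorem mainTheorem17:
  fixes a :: nat
  assumes "alg_closed_type TYPE('k::field_char_0)"
    and "a \<ge> 1"
  shows "comod_iso (ctensor (TnV a) (SnV (a - 1)) :: 'k comod)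
                   (ctensor (ctensor (TnV (a - 1)) cRinv) (SnV a))
       \<and> comod_iso (ctensor (SnV (a - 1)) (TnV a) :: 'k comod)
                   (ctensor (ctensor (SnV a) cRinv) (TnV (a - 1)))"
proof -
  obtain n where a: "a = Suc n" using assms(2) by (cases a) auto
  show ?thesis unfolding a using iso1[of n] iso2[of n] by simp
qed

end
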